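(* If MAPTree is run without a time budget, the binary decision tree corresponding to its output solution graph is a maximum a posteriori tree, i.e. it maximizes $P(T\mid\mathcal X,\mathcal Y)\propto P(\mathcal Y\mid\mathcal X,T)\,P(T\mid\mathcal X)$ over binary decision trees $T$ on $\mathcal X$ all of whose nodes are reached by at least one sample.
   Context: Let $x_1,\dots,x_N\in\{0,1\}^F$ be a binary dataset $\mathcal X$ with labels $\mathcal Y\in\{0,1\}^N$, $[N]=\{1,\dots,N\}$. For $\mathcal I\subseteq[N]$, $f\in[F]$, $k\in\{0,1\}$ let $\mathcal I|_{f=k}=\{i\in\mathcal I:(x_i)_f=k\}$, $c^k(\mathcal I)=|\{i\in\mathcal I:y_i=k\}|$, $\mathcal V(\mathcal I)=\{f:\mathcal I|_{f=0}\neq\emptyset\text{ and }\mathcal I|_{f=1}\neq\emptyset\}$. Fix $\rho^1,\rho^0>0$, $\alpha\in(0,1)$, $\beta\ge0$; $\ell_{\rm leaf}(c^1,c^0)=B(c^1+\rho^1,c^0+\rho^0)/B(\rho^1,\rho^0)$ ($B$ the Beta function), $p_{\rm split}(d)=\alpha(1+d)^{-\beta}$, $p_{\rm leaf}(d,\mathcal I)=1$ if $\mathcal V(\mathcal I)=\emptyset$ else $1-p_{\rm split}(d)$, $p_{\rm inner}(d,\mathcal I)=0$ if $\mathcal V(\mathcal I)=\emptyset$ else $p_{\rm split}(d)/|\mathcal V(\mathcal I)|$; $-\log0=+\infty$, and a minimum over an empty set is $+\infty$. Trees: a binary decision tree $T$ on $\mathcal X$ is a finite rooted tree whose internal nodes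 $m$ carry features $f(m)\in[F]$ and have a $0$-child and a $1$-child; $d(n)$ is depth (root $0$), $\mathcal I(\mathrm{root})=[N]$, the $k$-child of $m$ has $\mathcal I(m)|_{f(m)=k}$. $P(T\mid\mathcal X)=\prod_{l\text{ leaf}}p_{\rm leaf}(d(l),\mathcal I(l))\prod_{m\text{ internal}}p_{\rm inner}(d(m),\mathcal I(m))$ and $P(\mathcal Y\mid\mathcal X,T)=\prod_{l\text{ leaf}}\ell_{\rm leaf}(c^1(\mathcal I(l)),c^0(\mathcal I(l)))$. Graph $\mathcal G=\mathcal G_{\mathcal X,\mathcal Y}$: for nonempty $\mathcal I\subseteq[N]$, $d\in\{0,\dots,F\}$, an OR node $o_{\mathcal I,d}$ with terminal child $t_{\mathcal I,d}$ (edge cost $-\log p_{\rm leaf}(d,\mathcal I)-\log\ell_{\rm leaf}(c^1(\mathcal I),c^0(\mathcal I))$); for $d<F$, $f\in\mathcal V(\mathcal I)$, an AND child $a_{\mathcal I,d,f}$ (edge cost $-\log p_{\rm inner}(d,\mathcal I)$) with cost-$0$ edges to $o_{\mathcal I|_{f=0},d+1}$, $o_{\mathcal I|_{f=1},d+1}$; root $r=o_{[N],0}$; only nodes reachable from $r$ kept. A solution graph is a node set $\mathcal S\ni r$, all nodes reachable from $r$ inside $\mathcal S$, every AND node of $\mathcal S$ having both children in $\mathcal S$ and every OR node exactly one child in $\mathcal S$. A tree $T$ corresponds to the solution graph $\{o_{\mathcal I(n),d(n)}:n\in T\}\cup\{t_{\mathcal I(n),d(n)}:n\text{ leaf}\}\cup\{a_{\mathcal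 I(m),d(m),f(m)}:m\text{ internal}\}$, and this is a bijection onto solution graphs. Heuristic: $h(o_{\mathcal I,d})=-\max\{\log\ell_{\rm leaf}(c^1(\mathcal I),c^0(\mathcal I)),\log p_{\rm split}(d)+\log\ell_{\rm leaf}(c^1(\mathcal I),0)+\log\ell_{\rm leaf}(0,c^0(\mathcal I))\}$. MAPTree maintains a node set $\mathcal G'$, a set $\mathcal E$ of expanded OR nodes, and values $LB[u],UB[u]\in\mathbb R\cup\{+\infty\}$ for OR nodes ($UB[u]=+\infty$ until set); for an AND node $a$ with children $o_0,o_1$, $LB[a]=LB[o_0]+LB[o_1]$, $UB[a]=UB[o_0]+UB[o_1]$. Initialize $\mathcal G'=\{r\}$, $\mathcal E=\emptyset$, $LB[r]=h(r)$, $UB[r]=+\infty$. While $LB[r]<UB[r]$: (1) $o:=r$; while $o\in\mathcal E$, choose an AND child $a^*$ of $o$ minimizing $\mathrm{cost}(o,a)+LB[a]$, with children $o_0,o_1$, and set $o:=o_0$ if $UB[o_0]-LB[o_0]>UB[o_1]-LB[o_1]$, else $o:=o_1$. (2) Add $o$ to $\mathcal E$ and its terminal child to $\mathcal G'$; for each AND child $a$ of $o$ with children $o_0,o_1$, add $a,o_0,o_1$ to $\mathcal G'$ and set $LB[o_0]:=h(o_0)$, $LB[o_1]:=h(o_1)$. (3) Starting from $Q=\{o\}$, repeatedly remove from $Q$ an OR node $u$ of maximal depth, compute $v=\min\{\min_a(\mathrm{cost}(u,a)+LB[a]),\mathrm{cost}(u,t_u)\}$ over AND children $a$ and terminal child $t_u$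 of $u$; if $v>LB[u]$, set $LB[u]:=v$ and add to $Q$ every OR node of $\mathcal G'$ that is parent of an AND node of $\mathcal G'$ having $u$ as child. (4) The same with $UB$, updating when $v<UB[u]$. Output $\mathrm{getSolution}(r)$: for OR node $u$ with terminal child $t$, if $u$ has no AND child or $\mathrm{cost}(u,t)\le\min_a(\mathrm{cost}(u,a)+UB[a])$ return $\{u,t\}$; else with $a^*$ attaining the minimum and children $u_0,u_1$ return $\{u,a^*\}\cup\mathrm{getSolution}(u_0)\cup\mathrm{getSolution}(u_1)$. *)

theory Defs
  imports "HOL-Analysis.Analysis"
begin

text \<open>Samples are indexed by 1..N, features by 1..F. xx i f is the f-th bit of x_i,
  yy i is the label y_i (True = 1).\<close>

record inst =
  nN :: nat
  nF :: nat
  xx :: "nat \<Rightarrow> nat \<Rightarrow> bool"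
  yy :: "nat \<Rightarrow> bool"
  rho1 :: real
  rho0 :: real
  alpha :: real
  beta :: real

definition restr :: "inst \<Rightarrow> nat set \<Rightarrow> nat \<Rightarrow> bool \<Rightarrow> nat set" where
  "restr P I f k = {i \<in> I. xx P i f = k}"

definition cnt :: "inst \<Rightarrow> bool \<Rightarrow> nat set \<Rightarrow> nat" where
  "cnt P k I = card {i \<in> I. yy P i = k}"

definition valid_feats :: "inst \<Rightarrow> nat set \<Rightarrow> nat set" where
  "valid_feats P I = {f \<in> {1..nF P}. restr P I f False \<noteq> {} \<and> restr P I f True \<noteq> {}}"

definition leaf_lik :: "inst \<Rightarrow> nat \<Rightarrow> nat \<Rightarrow> real" where
  "leaf_lik P c1 c0 = (Beta (real c1 + rho1 P) (real c0 + rho0 P) :: real) / Beta (rho1 P) (rho0 P)"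

definition p_split :: "inst \<Rightarrow> nat \<Rightarrow> real" where
  "p_split P d = alpha P * (1 + real d) powr (- beta P)"

definition p_leaf :: "inst \<Rightarrow> nat \<Rightarrow> nat set \<Rightarrow> real" where
  "p_leaf P d I = (if valid_feats P I = {} then 1 else 1 - p_split P d)"

definition p_inner :: "inst \<Rightarrow> nat \<Rightarrow> nat set \<Rightarrow> real" where
  "p_inner P d I = (if valid_feats P I = {} then 0 else p_split P d / real (card (valid_feats P I)))"

text \<open>Node f t0 t1: internal node testing feature f, with 0-child t0 and 1-child t1.\<close>

datatype dtree = Leaf | Node nat dtree dtree

fun nodes_ok :: "inst \<Rightarrow> nat set \<Rightarrow> dtree \<Rightarrow> bool" where
  "nodes_ok P I Leaf = (I \<noteq> {})"
| "nodes_ok P I (Node f t0 t1) = (I \<noteq> {} \<and> f \<in> {1..nF P} \<and>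
      nodes_ok P (restr P I f False) t0 \<and> nodes_ok P (restr P I f True) t1)"

text \<open>Prior P(T | X) of the subtree rooted at a node with samples I and depth d.\<close>
fun prior :: "inst \<Rightarrow> nat set \<Rightarrow> nat \<Rightarrow> dtree \<Rightarrow> real" where
  "prior P I d Leaf = p_leaf P d I"
| "prior P I d (Node f t0 t1) = p_inner P d I *
      prior P (restr P I f False) (Suc d) t0 * prior P (restr P I f True) (Suc d) t1"

fun lik :: "inst \<Rightarrow> nat set \<Rightarrow> dtree \<Rightarrow> real" where
  "lik P I Leaf = leaf_lik P (cnt P True I) (cnt P False I)"
| "lik P I (Node f t0 t1) = lik P (restr P I f False) t0 * lik P (restr P I f True) t1"

definition unnorm_post :: "inst \<Rightarrow> dtree \<Rightarrow> real" where
  "unnorm_post P T = lik P {1..nN P} T * prior P {1..nN P} 0 T"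

datatype gnode = OrN "nat set" nat | TermN "nat set" nat | AndN "nat set" nat nat

definition ach :: "inst \<Rightarrow> nat set \<Rightarrow> nat \<Rightarrow> nat set" where
  "ach P I d = {f. d < nF P \<and> f \<in> valid_feats P I}"

fun gchildren :: "inst \<Rightarrow> gnode \<Rightarrow> gnode set" where
  "gchildren P (OrN I d) = insert (TermN I d) ((\<lambda>f. AndN I d f) ` ach P I d)"
| "gchildren P (TermN I d) = {}"
| "gchildren P (AndN I d f) = {OrN (restr P I f False) (Suc d), OrN (restr P I f True) (Suc d)}"

definition root :: "inst \<Rightarrow> gnode" where
  "root P = OrN {1..nN P} 0"

inductive_set gnodes :: "inst \<Rightarrow> gnode set" for P where
  "root P \<in> gnodes P"
| "u \<in> gnodes P \<Longrightarrow> v \<in> gchildren P u \<Longrightarrow> v \<in> gnodes P"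

definition mlog :: "real \<Rightarrow> ereal" where
  "mlog p = (if p \<le> 0 then \<infinity> else ereal (- ln p))"

definition cost_term :: "inst \<Rightarrow> nat set \<Rightarrow> nat \<Rightarrow> ereal" where
  "cost_term P I d = mlog (p_leaf P d I) + mlog (leaf_lik P (cnt P True I) (cnt P False I))"

definition cost_and :: "inst \<Rightarrow> nat set \<Rightarrow> nat \<Rightarrow> ereal" where
  "cost_and P I d = mlog (p_inner P d I)"

definition heur :: "inst \<Rightarrow> nat set \<Rightarrow> nat \<Rightarrow> ereal" where
  "heur P I d = ereal (- max (ln (leaf_lik P (cnt P True I) (cnt P False I)))
       (ln (p_split P d) + ln (leaf_lik P (cnt P True I) 0) + ln (leaf_lik P 0 (cnt P False I))))"

fun sol_of_tree :: "inst \<Rightarrow> nat set \<Rightarrow> nat \<Rightarrow> dtree \<Rightarrow> gnode set" where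
  "sol_of_tree P I d Leaf = {OrN I d, TermN I d}"
| "sol_of_tree P I d (Node f t0 t1) = {OrN I d, AndN I d f} \<union>
      sol_of_tree P (restr P I f False) (Suc d) t0 \<union> sol_of_tree P (restr P I f True) (Suc d) t1"

text \<open>State: (G', E, LB, UB). LB and UB are stored for OrN nodes; unset UB is +infinity.\<close>
type_synonym state = "gnode set \<times> gnode set \<times> (gnode \<Rightarrow> ereal) \<times> (gnode \<Rightarrow> ereal)"

definition init_state :: "inst \<Rightarrow> state" where
  "init_state P = ({root P}, {}, (\<lambda>_. 0)(root P := heur P {1..nN P} 0), (\<lambda>_. \<infinity>))"

definition achp :: "inst \<Rightarrow> gnode set \<Rightarrow> nat set \<Rightarrow> nat \<Rightarrow> nat set" where
  "achp P Gp I d = {f \<in> ach P I d. AndN I d f \<in> Gp}"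

definition and_val :: "inst \<Rightarrow> (gnode \<Rightarrow> ereal) \<Rightarrow> nat set \<Rightarrow> nat \<Rightarrow> nat \<Rightarrow> ereal" where
  "and_val P L I d f = L (OrN (restr P I f False) (Suc d)) + L (OrN (restr P I f True) (Suc d))"

definition min_and :: "inst \<Rightarrow> gnode set \<Rightarrow> (gnode \<Rightarrow> ereal) \<Rightarrow> nat set \<Rightarrow> nat \<Rightarrow> ereal" where
  "min_and P Gp L I d = (INF f\<in>achp P Gp I d. cost_and P I d + and_val P L I d f)"

definition node_val :: "inst \<Rightarrow> gnode set \<Rightarrow> (gnode \<Rightarrow> ereal) \<Rightarrow> nat set \<Rightarrow> nat \<Rightarrow> ereal" where
  "node_val P Gp L I d = min (min_and P Gp L I d) (cost_term P I d)"

definition descend :: "inst \<Rightarrow> state \<Rightarrow> nat set \<times> nat \<Rightarrow> nat set \<times> nat \<Rightarrow> bool" where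
  "descend P s u v = (case s of (Gp, E, LB, UB) \<Rightarrow> case u of (I, d) \<Rightarrow>
     OrN I d \<in> E \<and>
     (\<exists>f \<in> achp P Gp I d.
        cost_and P I d + and_val P LB I d f = min_and P Gp LB I d \<and>
        (let o0 = OrN (restr P I f False) (Suc d); o1 = OrN (restr P I f True) (Suc d) in
         v = (if UB o0 - LB o0 > UB o1 - LB o1 then (restr P I f False, Suc d)
              else (restr P I f True, Suc d)))))"

definition expand :: "inst \<Rightarrow> nat set \<Rightarrow> nat \<Rightarrow> state \<Rightarrow> state" where
  "expand P I d s = (case s of (Gp, E, LB, UB) \<Rightarrow>
     (let kids = {OrN (restr P I f k) (Suc d) | f k. f \<in> ach P I d} in
      (Gp \<union> {TermN I d} \<union> (\<lambda>f. AndN I d f) ` ach P I d \<union> kids,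
       insert (OrN I d) E,
       (\<lambda>u. if u \<in> kids then (case u of OrN J e \<Rightarrow> heur P J e | _ \<Rightarrow> LB u) else LB u),
       UB)))"

definition or_parents :: "inst \<Rightarrow> gnode set \<Rightarrow> nat set \<Rightarrow> nat \<Rightarrow> (nat set \<times> nat) set" where
  "or_parents P Gp J e = {(I, d) | I d f. OrN I d \<in> Gp \<and> AndN I d f \<in> Gp \<and>
      OrN J e \<in> gchildren P (AndN I d f)}"

text \<open>Steps (3)/(4): one iteration of the propagation loop; the flag lower selects LB (True)
  or UB (False). Q is the work set of OrN nodes (as pairs (I, d)).\<close>
definition prop_step :: "inst \<Rightarrow> gnode set \<Rightarrow> bool \<Rightarrow>
    (nat set \<times> nat) set \<times> (gnode \<Rightarrow> ereal) \<Rightarrow> (nat set \<times> nat) set \<times> (gnode \<Rightarrow> ereal) \<Rightarrow> bool" where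
  "prop_step P Gp lower st st' = (case st of (Q, L) \<Rightarrow>
     \<exists>I d. (I, d) \<in> Q \<and> (\<forall>(J, e) \<in> Q. e \<le> d) \<and>
       (let v = node_val P Gp L I d in
        if (if lower then v > L (OrN I d) else v < L (OrN I d))
        then st' = ((Q - {(I, d)}) \<union> or_parents P Gp I d, L(OrN I d := v))
        else st' = (Q - {(I, d)}, L)))"

definition maptree_iter :: "inst \<Rightarrow> state \<Rightarrow> state \<Rightarrow> bool" where
  "maptree_iter P s s' = (case s of (Gp, E, LB, UB) \<Rightarrow>
     LB (root P) < UB (root P) \<and>
     (\<exists>I d. (descend P s)\<^sup>*\<^sup>* ({1..nN P}, 0) (I, d) \<and> OrN I d \<notin> E \<and>
        (case expand P I d s of (Gp2, E2, LB2, UB2) \<Rightarrow>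
          \<exists>LB3 UB4.
            (prop_step P Gp2 True)\<^sup>*\<^sup>* ({(I, d)}, LB2) ({}, LB3) \<and>
            (prop_step P Gp2 False)\<^sup>*\<^sup>* ({(I, d)}, UB2) ({}, UB4) \<and>
            s' = (Gp2, E2, LB3, UB4))))"

definition maptree_done :: "inst \<Rightarrow> state \<Rightarrow> bool" where
  "maptree_done P s = (case s of (Gp, E, LB, UB) \<Rightarrow> \<not> LB (root P) < UB (root P))"

text \<open>getSolution: all possible outputs (ties in the argmin resolved arbitrarily).\<close>
inductive get_solution :: "inst \<Rightarrow> state \<Rightarrow> nat set \<Rightarrow> nat \<Rightarrow> gnode set \<Rightarrow> bool"
  for P s where
  leaf: "s = (Gp, E, LB, UB) \<Longrightarrow>
     achp P Gp I d = {} \<or> cost_term P I d \<le> min_and P Gp UB I d \<Longrightarrow>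
     get_solution P s I d {OrN I d, TermN I d}"
| split: "s = (Gp, E, LB, UB) \<Longrightarrow> achp P Gp I d \<noteq> {} \<Longrightarrow>
     \<not> cost_term P I d \<le> min_and P Gp UB I d \<Longrightarrow>
     f \<in> achp P Gp I d \<Longrightarrow> cost_and P I d + and_val P UB I d f = min_and P Gp UB I d \<Longrightarrow>
     get_solution P s (restr P I f False) (Suc d) S0 \<Longrightarrow>
     get_solution P s (restr P I f True) (Suc d) S1 \<Longrightarrow>
     get_solution P s I d ({OrN I d, AndN I d f} \<union> S0 \<union> S1)"

end

theory Submission
  imports Defs
begin


locale pos = fixes P :: inst
  assumes r1: "rho1 P > 0" and r0: "rho0 P > 0" and a0: "0 < alpha P" and a1: "alpha P < 1"
    and b0: "beta P \<ge> 0"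
begin

lemma Beta_pos: "x > 0 \<Longrightarrow> y > 0 \<Longrightarrow> Beta x (y::real) > 0"
  by (simp add: Beta_def)

lemma L_pos: "leaf_lik P a b > 0"
  unfolding leaf_lik_def using r1 r0 by (intro divide_pos_pos Beta_pos) auto

lemma L_ge0[simp]: "leaf_lik P a b \<ge> 0" using L_pos[of a b] by simp
lemma L_ne0[simp]: "leaf_lik P a b \<noteq> 0" using L_pos[of a b] by simp

lemma L00: "leaf_lik P 0 0 = 1"
  unfolding leaf_lik_def using r1 r0 Beta_pos[of "rho1 P" "rho0 P"] by simp

lemma notnp: "(x::real) > 0 \<Longrightarrow> x \<notin> \<int>\<^sub>\<le>\<^sub>0"
  by (auto elim!: nonpos_Ints_cases)

lemma L_suc1: "leaf_lik P (Suc a) b = leaf_lik P a b * ((a + rho1 P) / (a + b + rho1 P + rho0 P))"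
proof -
  have "(real a + rho1 P + (b + rho0 P)) * Beta (real a + rho1 P + 1) (b + rho0 P) = (a + rho1 P) * Beta (a + rho1 P) (b + rho0 P)"
    by (rule Beta_plus1_left) (rule notnp, use r1 in auto)
  moreover have "real a + rho1 P + (b + rho0 P) > 0" using r1 r0 by auto
  ultimately have "Beta (real (Suc a) + rho1 P) (b + rho0 P) = Beta (a + rho1 P) (b + rho0 P) * ((a + rho1 P) / (a + b + rho1 P + rho0 P))"
    by (simp add: field_simps)
  then show ?thesis unfolding leaf_lik_def by simp
qed

lemma L_suc0: "leaf_lik P a (Suc b) = leaf_lik P a b * ((b + rho0 P) / (a + b + rho1 P + rho0 P))"
proof -
  have "(real a + rho1 P + (b + rho0 P)) * Beta (real a + rho1 P) (b + rho0 P + 1) = (b + rho0 P) * Beta (a + rho1 P) (b + rho0 P)"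
    by (rule Beta_plus1_right) (rule notnp, use r0 in auto)
  moreover have "real a + rho1 P + (b + rho0 P) > 0" using r1 r0 by auto
  ultimately have "Beta (real a + rho1 P) (real (Suc b) + rho0 P) = Beta (a + rho1 P) (b + rho0 P) * ((b + rho0 P) / (a + b + rho1 P + rho0 P))"
    by (simp add: field_simps)
  then show ?thesis unfolding leaf_lik_def by simp
qed

lemma L_split: "leaf_lik P a b \<le> leaf_lik P a 0 * leaf_lik P 0 b"
proof (induction b)
  case 0 then show ?case by (simp add: L00)
next
  case (Suc b)
  have f: "(b + rho0 P) / (a + b + rho1 P + rho0 P) \<le> (b + rho0 P) / (0 + b + rho1 P + rho0 P)"
    using r0 r1 by (intro divide_left_mono) auto
  have "leaf_lik P a (Suc b) = leaf_lik P a b * ((b + rho0 P) / (a + b + rho1 P + rho0 P))" using L_suc0[of a b] by (simp add: add.assoc)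
  also have "\<dots> \<le> (leaf_lik P a 0 * leaf_lik P 0 b) * ((b + rho0 P) / (0 + b + rho1 P + rho0 P))"
    using Suc f L_pos r0 r1 by (intro mult_mono) (auto intro: less_imp_le)
  also have "\<dots> = leaf_lik P a 0 * leaf_lik P 0 (Suc b)" using L_suc0[of 0 b] by simp
  finally show ?case .
qed

lemma L_add1: "leaf_lik P a1 0 * leaf_lik P a2 0 \<le> leaf_lik P (a1 + a2) 0"
proof (induction a2)
  case 0 then show ?case by (simp add: L00)
next
  case (Suc a2)
  have f: "(a2 + rho1 P) / (a2 + 0 + rho1 P + rho0 P) \<le> ((a1 + a2) + rho1 P) / ((a1 + a2) + 0 + rho1 P + rho0 P)"
    using r0 r1 by (simp add: field_simps)
  have "leaf_lik P a1 0 * leaf_lik P (Suc a2) 0 = (leaf_lik P a1 0 * leaf_lik P a2 0) * ((a2 + rho1 P) / (a2 + 0 + rho1 P + rho0 P))"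
    by (simp add: L_suc1)
  also have "\<dots> \<le> leaf_lik P (a1 + a2) 0 * (((a1 + a2) + rho1 P) / ((a1 + a2) + 0 + rho1 P + rho0 P))"
    using Suc f L_pos r0 r1 by (intro mult_mono) (auto intro: less_imp_le)
  also have "\<dots> = leaf_lik P (a1 + Suc a2) 0" using L_suc1[of "a1+a2" 0] by simp
  finally show ?case .
qed

lemma L_add0: "leaf_lik P 0 b1 * leaf_lik P 0 b2 \<le> leaf_lik P 0 (b1 + b2)"
proof (induction b2)
  case 0 then show ?case by (simp add: L00)
next
  case (Suc b2)
  have f: "(b2 + rho0 P) / (0 + b2 + rho1 P + rho0 P) \<le> ((b1 + b2) + rho0 P) / (0 + (b1 + b2) + rho1 P + rho0 P)"
    using r0 r1 by (simp add: field_simps)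
  have "leaf_lik P 0 b1 * leaf_lik P 0 (Suc b2) = (leaf_lik P 0 b1 * leaf_lik P 0 b2) * ((b2 + rho0 P) / (0 + b2 + rho1 P + rho0 P))"
    by (simp add: L_suc0)
  also have "\<dots> \<le> leaf_lik P 0 (b1 + b2) * (((b1 + b2) + rho0 P) / (0 + (b1 + b2) + rho1 P + rho0 P))"
    using Suc f L_pos r0 r1 by (intro mult_mono) (auto intro: less_imp_le)
  also have "\<dots> = leaf_lik P 0 (b1 + Suc b2)" using L_suc0[of 0 "b1+b2"] by simp
  finally show ?case .
qed


lemma ps_pos: "p_split P d > 0"
  unfolding p_split_def using a0 by simp

lemma ps_le: "p_split P d \<le> alpha P"
proof -
  have "(1 + real d) powr (- beta P) \<le> 1"
    using b0 powr_mono2'[of "- beta P" 1 "1 + real d"] by simp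
  then show ?thesis unfolding p_split_def using a0 by (simp add: mult_left_le)
qed

lemma ps_lt1: "p_split P d < 1" using ps_le a1 by (rule le_less_trans)

lemma pl_pos: "p_leaf P d I > 0" unfolding p_leaf_def using ps_lt1 by auto
lemma pl_le1: "p_leaf P d I \<le> 1" unfolding p_leaf_def using ps_pos[of d] by auto

lemma pi_nonneg: "p_inner P d I \<ge> 0" unfolding p_inner_def using ps_pos[of d] by auto
lemma pi_le: "p_inner P d I \<le> p_split P d"
proof (cases "valid_feats P I = {}")
  case True then show ?thesis using ps_pos[of d] by (simp add: p_inner_def)
next
  case False
  have "finite (valid_feats P I)" unfolding valid_feats_def by auto
  then have "card (valid_feats P I) \<ge> 1" using False by (simp add: Suc_le_eq card_gt_0_iff)
  then show ?thesis using False ps_pos[of d] by (simp add: p_inner_def divide_le_eq)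
qed
lemma pi_pos: "f \<in> valid_feats P I \<Longrightarrow> p_inner P d I > 0"
proof -
  assume f: "f \<in> valid_feats P I"
  have "finite (valid_feats P I)" unfolding valid_feats_def by auto
  then have "card (valid_feats P I) > 0" using f by (auto simp: card_gt_0_iff)
  then show ?thesis using f ps_pos[of d] by (auto simp: p_inner_def)
qed

lemma prior_bounds: "0 \<le> prior P I d T \<and> prior P I d T \<le> 1"
proof (induction T arbitrary: I d)
  case Leaf then show ?case using pl_pos[of d I] pl_le1[of d I] by simp
next
  case (Node f t0 t1)
  have "p_inner P d I \<le> 1" using pi_le[of d I] ps_lt1[of d] by simp
  then show ?case using Node.IH[of "restr P I f False" "Suc d"] Node.IH[of "restr P I f True" "Suc d"] pi_nonneg[of d I]
    by (auto intro: mult_le_one mult_nonneg_nonneg)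
qed
end

lemma node_valid: "nodes_ok P I (Node f t0 t1) \<Longrightarrow> f \<in> valid_feats P I"
  by (cases t0; cases t1) (auto simp: valid_feats_def)

lemma nodes_ok_ne: "nodes_ok P I T \<Longrightarrow> I \<noteq> {}"
  by (cases T) auto

fun tc :: "inst \<Rightarrow> nat set \<Rightarrow> nat \<Rightarrow> dtree \<Rightarrow> ereal" where
  "tc P I d Leaf = cost_term P I d"
| "tc P I d (Node f t0 t1) = cost_and P I d + tc P (restr P I f False) (Suc d) t0 + tc P (restr P I f True) (Suc d) t1"

lemma cnt_split: "finite I \<Longrightarrow> cnt P k I = cnt P k (restr P I f False) + cnt P k (restr P I f True)"
proof -
  assume fi: "finite I"
  have "{i \<in> I. yy P i = k} = {i \<in> restr P I f False. yy P i = k} \<union> {i \<in> restr P I f True. yy P i = k}"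
    by (auto simp: restr_def)
  moreover have "{i \<in> restr P I f False. yy P i = k} \<inter> {i \<in> restr P I f True. yy P i = k} = {}"
    by (auto simp: restr_def)
  ultimately show ?thesis unfolding cnt_def using fi
    by (simp add: card_Un_disjoint restr_def)
qed

context pos begin

lemma lik_pos: "lik P I T > 0"
  by (induction T arbitrary: I) (auto simp: L_pos)

lemma prior_pos: "nodes_ok P I T \<Longrightarrow> prior P I d T > 0"
proof (induction T arbitrary: I d)
  case Leaf then show ?case using pl_pos by simp
next
  case (Node f t0 t1)
  then show ?case using pi_pos[OF node_valid[OF Node.prems], of d] by auto
qed

lemma tc_eq: "nodes_ok P I T \<Longrightarrow> tc P I d T = ereal (- ln (lik P I T * prior P I d T))"
proof (induction T arbitrary: I d)
  case Leaf then show ?case using pl_pos[of d I] L_pos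
    by (simp add: cost_term_def mlog_def ln_mult not_le)
next
  case (Node f t0 t1)
  let ?I0 = "restr P I f False" and ?I1 = "restr P I f True"
  have pi: "p_inner P d I > 0" using pi_pos[OF node_valid[OF Node.prems]] .
  have ok: "nodes_ok P ?I0 t0" "nodes_ok P ?I1 t1" using Node.prems by auto
  have p: "lik P ?I0 t0 > 0" "lik P ?I1 t1 > 0" "prior P ?I0 (Suc d) t0 > 0" "prior P ?I1 (Suc d) t1 > 0"
    using lik_pos prior_pos ok by auto
  show ?case using Node.IH(1)[OF ok(1), of "Suc d"] Node.IH(2)[OF ok(2), of "Suc d"] pi p
    by (simp add: cost_and_def mlog_def ln_mult not_le)
qed

lemma lik_bound: "finite I \<Longrightarrow> lik P I T \<le> leaf_lik P (cnt P True I) 0 * leaf_lik P 0 (cnt P False I)"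
proof (induction T arbitrary: I)
  case Leaf then show ?case using L_split by simp
next
  case (Node f t0 t1)
  let ?I0 = "restr P I f False" and ?I1 = "restr P I f True"
  have fin: "finite ?I0" "finite ?I1" using Node.prems by (auto simp: restr_def)
  let ?a0 = "cnt P True ?I0" and ?a1 = "cnt P True ?I1" and ?b0 = "cnt P False ?I0" and ?b1 = "cnt P False ?I1"
  have "lik P I (Node f t0 t1) = lik P ?I0 t0 * lik P ?I1 t1" by simp
  also have "\<dots> \<le> (leaf_lik P ?a0 0 * leaf_lik P 0 ?b0) * (leaf_lik P ?a1 0 * leaf_lik P 0 ?b1)"
    using Node.IH(1)[OF fin(1)] Node.IH(2)[OF fin(2)] lik_pos
    by (intro mult_mono) (auto intro: less_imp_le)
  also have "\<dots> = (leaf_lik P ?a0 0 * leaf_lik P ?a1 0) * (leaf_lik P 0 ?b0 * leaf_lik P 0 ?b1)"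
    by (simp add: ac_simps)
  also have "\<dots> \<le> leaf_lik P (?a0 + ?a1) 0 * leaf_lik P 0 (?b0 + ?b1)"
    using L_add1 L_add0 L_pos by (intro mult_mono) (auto intro: less_imp_le)
  also have "\<dots> = leaf_lik P (cnt P True I) 0 * leaf_lik P 0 (cnt P False I)"
    using cnt_split[OF Node.prems, where P=P and k=True and f=f] cnt_split[OF Node.prems, where P=P and k=False and f=f] by simp
  finally show ?case .
qed

lemma heur_adm: "finite I \<Longrightarrow> nodes_ok P I T \<Longrightarrow> heur P I d \<le> tc P I d T"
proof -
  assume fi: "finite I" and ok: "nodes_ok P I T"
  let ?c1 = "cnt P True I" and ?c0 = "cnt P False I"
  have lp: "lik P I T * prior P I d T > 0" using lik_pos prior_pos[OF ok] by simp
  have "ln (lik P I T * prior P I d T) \<le> max (ln (leaf_lik P ?c1 ?c0))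
       (ln (p_split P d) + ln (leaf_lik P ?c1 0) + ln (leaf_lik P 0 ?c0))"
  proof (cases T)
    case Leaf
    have "lik P I T * prior P I d T \<le> leaf_lik P ?c1 ?c0"
      using Leaf pl_le1[of d I] L_pos[of ?c1 ?c0] by (simp add: mult_left_le)
    then have "ln (lik P I T * prior P I d T) \<le> ln (leaf_lik P ?c1 ?c0)" using lp by simp
    then show ?thesis by simp
  next
    case (Node f t0 t1)
    let ?I0 = "restr P I f False" and ?I1 = "restr P I f True"
    have "prior P I d T = p_inner P d I * (prior P ?I0 (Suc d) t0 * prior P ?I1 (Suc d) t1)" using Node by simp
    also have "\<dots> \<le> p_split P d * 1"
      using pi_le[of d I] pi_nonneg[of d I] prior_bounds[of ?I0 "Suc d" t0] prior_bounds[of ?I1 "Suc d" t1]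
      by (intro mult_mono) (auto intro: mult_le_one)
    finally have pr: "prior P I d T \<le> p_split P d" by simp
    have "lik P I T * prior P I d T \<le> (leaf_lik P ?c1 0 * leaf_lik P 0 ?c0) * p_split P d"
      using lik_bound[OF fi, of T] pr lik_pos prior_bounds[of I d T]
      by (intro mult_mono) (auto intro: less_imp_le)
    then have "ln (lik P I T * prior P I d T) \<le> ln ((leaf_lik P ?c1 0 * leaf_lik P 0 ?c0) * p_split P d)"
      using lp by simp
    also have "\<dots> = ln (p_split P d) + ln (leaf_lik P ?c1 0) + ln (leaf_lik P 0 ?c0)"
      using L_pos ps_pos[of d] by (simp add: ln_mult)
    finally show ?thesis by simp
  qed
  then show ?thesis unfolding heur_def tc_eq[OF ok] by simp
qed

end


definition good :: "inst \<Rightarrow> nat set \<Rightarrow> nat \<Rightarrow> bool" where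
  "good P I d = (d + card (valid_feats P I) \<le> nF P)"

lemma fin_valid[simp]: "finite (valid_feats P I)" unfolding valid_feats_def by auto

lemma good_kid: assumes g: "good P I d" and f: "f \<in> valid_feats P I"
  shows "good P (restr P I f k) (Suc d)"
proof -
  have sub: "valid_feats P (restr P I f k) \<subseteq> valid_feats P I - {f}"
  proof
    fix g assume "g \<in> valid_feats P (restr P I f k)"
    then obtain i j where g: "g \<in> {1..nF P}" "i \<in> I" "xx P i f = k" "\<not> xx P i g" "j \<in> I" "xx P j f = k" "xx P j g"
      unfolding valid_feats_def restr_def by blast
    then have "g \<noteq> f" by blast
    moreover have "g \<in> valid_feats P I" using g unfolding valid_feats_def restr_def by blast
    ultimately show "g \<in> valid_feats P I - {f}" by blast
  qed
  have "card (valid_feats P (restr P I f k)) \<le> card (valid_feats P I - {f})"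
    by (rule card_mono) (use sub in auto)
  also have "\<dots> = card (valid_feats P I) - 1" using f by simp
  finally show ?thesis unfolding good_def
  proof -
    have "valid_feats P I \<noteq> {}" using f by blast
    then have "card (valid_feats P I) > 0" using card_gt_0_iff[of "valid_feats P I"] by simp
    then show "card (valid_feats P (restr P I f k)) \<le> card (valid_feats P I) - 1 \<Longrightarrow> Suc d + card (valid_feats P (restr P I f k)) \<le> nF P"
      using g unfolding good_def by linarith
  qed
qed

lemma good_ach: "good P I d \<Longrightarrow> nodes_ok P I (Node f t0 t1) \<Longrightarrow> f \<in> ach P I d"
proof -
  assume g: "good P I d" and ok: "nodes_ok P I (Node f t0 t1)"
  have f: "f \<in> valid_feats P I" by (rule node_valid[OF ok])
  then have "card (valid_feats P I) > 0" using card_gt_0_iff[of "valid_feats P I"] by auto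
  then show ?thesis using g f unfolding good_def ach_def by auto
qed

definition struct :: "inst \<Rightarrow> gnode set \<Rightarrow> gnode set \<Rightarrow> bool" where
  "struct P Gp E = (root P \<in> Gp \<and>
     (\<forall>I d. OrN I d \<in> Gp \<longrightarrow> good P I d \<and> I \<subseteq> {1..nN P}) \<and>
     (\<forall>I d f. AndN I d f \<in> Gp \<longrightarrow> OrN I d \<in> E \<and> f \<in> ach P I d \<and>
         OrN (restr P I f False) (Suc d) \<in> Gp \<and> OrN (restr P I f True) (Suc d) \<in> Gp) \<and>
     (\<forall>I d. OrN I d \<in> E \<longrightarrow> OrN I d \<in> Gp \<and> (\<forall>f\<in>ach P I d. AndN I d f \<in> Gp)))"

lemma structD:
  assumes "struct P Gp E"
  shows "root P \<in> Gp"
  "OrN I d \<in> Gp \<Longrightarrow> good P I d" "OrN I d \<in> Gp \<Longrightarrow> I \<subseteq> {1..nN P}"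
  "AndN I d f \<in> Gp \<Longrightarrow> OrN I d \<in> E" "AndN I d f \<in> Gp \<Longrightarrow> f \<in> ach P I d"
  "AndN I d f \<in> Gp \<Longrightarrow> OrN (restr P I f False) (Suc d) \<in> Gp"
  "AndN I d f \<in> Gp \<Longrightarrow> OrN (restr P I f True) (Suc d) \<in> Gp"
  "OrN I d \<in> E \<Longrightarrow> OrN I d \<in> Gp" "OrN I d \<in> E \<Longrightarrow> f \<in> ach P I d \<Longrightarrow> AndN I d f \<in> Gp"
  using assms unfolding struct_def by blast+

lemma prop_stepE:
  assumes "prop_step P Gp lower (Q, L) st'"
  obtains I d where "(I, d) \<in> Q"
    "(if lower then node_val P Gp L I d > L (OrN I d) else node_val P Gp L I d < L (OrN I d)) \<Longrightarrow>
       st' = ((Q - {(I, d)}) \<union> or_parents P Gp I d, L(OrN I d := node_val P Gp L I d))"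
    "\<not> (if lower then node_val P Gp L I d > L (OrN I d) else node_val P Gp L I d < L (OrN I d)) \<Longrightarrow>
       st' = (Q - {(I, d)}, L)"
proof -
  from assms obtain I d where "(I, d) \<in> Q" and
    r: "let v = node_val P Gp L I d in
        if (if lower then v > L (OrN I d) else v < L (OrN I d))
        then st' = ((Q - {(I, d)}) \<union> or_parents P Gp I d, L(OrN I d := v))
        else st' = (Q - {(I, d)}, L)"
    unfolding prop_step_def prod.case by blast
  then show ?thesis using that unfolding Let_def by presburger
qed

definition lbok :: "inst \<Rightarrow> gnode set \<Rightarrow> (gnode \<Rightarrow> ereal) \<Rightarrow> bool" where
  "lbok P Gp L = (\<forall>I d T. OrN I d \<in> Gp \<longrightarrow> nodes_ok P I T \<longrightarrow> L (OrN I d) \<le> tc P I d T)"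

definition ubok :: "inst \<Rightarrow> gnode set \<Rightarrow> (gnode \<Rightarrow> ereal) \<Rightarrow> bool" where
  "ubok P Gp U = (\<forall>I d. node_val P Gp U I d \<le> U (OrN I d))"

definition inv :: "inst \<Rightarrow> state \<Rightarrow> bool" where
  "inv P s = (case s of (Gp, E, LB, UB) \<Rightarrow> struct P Gp E \<and> lbok P Gp LB \<and> ubok P Gp UB)"

lemma node_val_lb:
  assumes st: "struct P Gp E" and lb: "lbok P Gp L" and e: "OrN I d \<in> E" and ok: "nodes_ok P I T"
  shows "node_val P Gp L I d \<le> tc P I d T"
proof (cases T)
  case Leaf then show ?thesis by (simp add: node_val_def)
next
  case (Node f t0 t1)
  have g: "good P I d" using structD(8)[OF st e] structD(2)[OF st] by blast
  have fa: "f \<in> ach P I d" using good_ach[OF g, of f t0 t1] ok Node by blast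
  have an: "AndN I d f \<in> Gp" using structD(9)[OF st e fa] .
  have k0: "OrN (restr P I f False) (Suc d) \<in> Gp" and k1: "OrN (restr P I f True) (Suc d) \<in> Gp"
    using structD(6,7)[OF st an] by auto
  have ok0: "nodes_ok P (restr P I f False) t0" and ok1: "nodes_ok P (restr P I f True) t1"
    using ok Node by auto
  have "min_and P Gp L I d \<le> cost_and P I d + and_val P L I d f"
    unfolding min_and_def by (rule INF_lower) (simp add: achp_def fa an)
  also have "\<dots> \<le> cost_and P I d + (tc P (restr P I f False) (Suc d) t0 + tc P (restr P I f True) (Suc d) t1)"
    unfolding and_val_def using lb k0 k1 ok0 ok1 unfolding lbok_def
    by (intro add_mono order.refl) blast+
  also have "\<dots> = tc P I d T" using Node by (simp add: add.assoc)
  finally show ?thesis unfolding node_val_def by (simp add: min.coboundedI1)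
qed

lemma lb_step:
  assumes ps: "prop_step P Gp True st st'" and stt: "struct P Gp E"
    and h: "(\<forall>(J, e)\<in>fst st. OrN J e \<in> E) \<and> lbok P Gp (snd st)"
  shows "(\<forall>(J, e)\<in>fst st'. OrN J e \<in> E) \<and> lbok P Gp (snd st')"
proof -
  obtain Q L where stq: "st = (Q, L)" by (cases st)
  from ps[unfolded stq] obtain I d where q: "(I, d) \<in> Q" and
    r1: "node_val P Gp L I d > L (OrN I d) \<Longrightarrow> st' = ((Q - {(I, d)}) \<union> or_parents P Gp I d, L(OrN I d := node_val P Gp L I d))"
    and r2: "\<not> node_val P Gp L I d > L (OrN I d) \<Longrightarrow> st' = (Q - {(I, d)}, L)"
    by (rule prop_stepE) auto
  have qE: "\<forall>(J, e)\<in>Q. OrN J e \<in> E" and lb: "lbok P Gp L" using h stq by auto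
  have eI: "OrN I d \<in> E" using qE q by auto
  have opE: "\<forall>(J, e)\<in>or_parents P Gp I d. OrN J e \<in> E"
    using structD(4)[OF stt] unfolding or_parents_def by blast
  let ?v = "node_val P Gp L I d"
  show ?thesis
  proof (cases "?v > L (OrN I d)")
    case True
    then have st': "st' = ((Q - {(I, d)}) \<union> or_parents P Gp I d, L(OrN I d := ?v))"
      using r1 r2 by simp
    have "lbok P Gp (L(OrN I d := ?v))"
      unfolding lbok_def
    proof (intro allI impI)
      fix J e T assume "OrN J e \<in> Gp" "nodes_ok P J T"
      then show "(L(OrN I d := ?v)) (OrN J e) \<le> tc P J e T"
        using lb node_val_lb[OF stt lb eI] unfolding lbok_def by auto
    qed
    then show ?thesis using st' qE opE by auto
  next
    case False
    then have "st' = (Q - {(I, d)}, L)" using r1 r2 by simp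
    then show ?thesis using qE lb by auto
  qed
qed

lemma lb_steps:
  assumes "(prop_step P Gp True)\<^sup>*\<^sup>* st st'" and "struct P Gp E"
    and "(\<forall>(J, e)\<in>fst st. OrN J e \<in> E) \<and> lbok P Gp (snd st)"
  shows "(\<forall>(J, e)\<in>fst st'. OrN J e \<in> E) \<and> lbok P Gp (snd st')"
  using assms(1,3)
proof (induction rule: rtranclp_induct)
  case base then show ?case by simp
next
  case (step y z) then show ?case using lb_step[OF step(2) assms(2)] by blast
qed

lemma min_and_mono:
  assumes "\<And>J e. U' (OrN J e) \<le> U (OrN J e)" and "Gp \<subseteq> Gp'"
  shows "min_and P Gp' U' I d \<le> min_and P Gp U I d"
  unfolding min_and_def
proof (rule INF_mono)
  fix f assume "f \<in> achp P Gp I d"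
  then have "f \<in> achp P Gp' I d" using assms(2) by (auto simp: achp_def)
  moreover have "cost_and P I d + and_val P U' I d f \<le> cost_and P I d + and_val P U I d f"
    unfolding and_val_def by (intro add_mono order.refl assms(1))
  ultimately show "\<exists>g\<in>achp P Gp' I d. cost_and P I d + and_val P U' I d g \<le> cost_and P I d + and_val P U I d f"
    by blast
qed

lemma node_val_mono:
  assumes "\<And>J e. U' (OrN J e) \<le> U (OrN J e)" and "Gp \<subseteq> Gp'"
  shows "node_val P Gp' U' I d \<le> node_val P Gp U I d"
  unfolding node_val_def using min_and_mono[of U' U Gp Gp' P I d, OF assms] by (simp add: min.coboundedI1 min_le_iff_disj)

lemma node_val_upd: "node_val P Gp (U(OrN I d := v)) I d = node_val P Gp U I d"
  by (simp add: node_val_def min_and_def and_val_def)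

lemma ub_step:
  assumes ps: "prop_step P Gp False st st'" and h: "ubok P Gp (snd st)"
  shows "ubok P Gp (snd st')"
proof -
  obtain Q L where stq: "st = (Q, L)" by (cases st)
  from ps[unfolded stq] obtain I d where
    r1: "node_val P Gp L I d < L (OrN I d) \<Longrightarrow> st' = ((Q - {(I, d)}) \<union> or_parents P Gp I d, L(OrN I d := node_val P Gp L I d))"
    and r2: "\<not> node_val P Gp L I d < L (OrN I d) \<Longrightarrow> st' = (Q - {(I, d)}, L)"
    by (rule prop_stepE) auto
  have ub: "ubok P Gp L" using h stq by auto
  let ?v = "node_val P Gp L I d"
  show ?thesis
  proof (cases "?v < L (OrN I d)")
    case True
    then have st': "snd st' = L(OrN I d := ?v)" using r1 r2 by simp
    have le: "\<And>J e. (L(OrN I d := ?v)) (OrN J e) \<le> L (OrN J e)" using True by auto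
    have "ubok P Gp (L(OrN I d := ?v))"
      unfolding ubok_def
    proof (intro allI)
      fix J e
      show "node_val P Gp (L(OrN I d := ?v)) J e \<le> (L(OrN I d := ?v)) (OrN J e)"
      proof (cases "J = I \<and> e = d")
        case True then show ?thesis by (simp add: node_val_upd)
      next
        case False
        have "node_val P Gp (L(OrN I d := ?v)) J e \<le> node_val P Gp L J e"
          by (rule node_val_mono) (use le in auto)
        also have "\<dots> \<le> L (OrN J e)" using ub unfolding ubok_def by blast
        finally show ?thesis using False by auto
      qed
    qed
    then show ?thesis using st' by simp
  next
    case False
    then have "st' = (Q - {(I, d)}, L)" using r1 r2 by simp
    then show ?thesis using ub by auto
  qed
qed

lemma ub_steps:
  assumes "(prop_step P Gp False)\<^sup>*\<^sup>* st st'" and "ubok P Gp (snd st)"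
  shows "ubok P Gp (snd st')"
  using assms
proof (induction rule: rtranclp_induct)
  case base then show ?case by simp
next
  case (step y z) then show ?case using ub_step by blast
qed

lemma ubok_mono: "ubok P Gp U \<Longrightarrow> Gp \<subseteq> Gp' \<Longrightarrow> ubok P Gp' U"
  unfolding ubok_def using node_val_mono[of U U Gp Gp' P] by (meson order_trans order.refl)

lemma descend_in:
  assumes "descend P (Gp, E, LB, UB) u v" and "struct P Gp E"
  shows "OrN (fst v) (snd v) \<in> Gp"
proof -
  obtain I d where u: "u = (I, d)" by (cases u)
  from assms(1) obtain f where e: "OrN I d \<in> E" and f: "f \<in> achp P Gp I d" and
    v: "v = (if UB (OrN (restr P I f False) (Suc d)) - LB (OrN (restr P I f False) (Suc d)) >
                UB (OrN (restr P I f True) (Suc d)) - LB (OrN (restr P I f True) (Suc d))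
             then (restr P I f False, Suc d) else (restr P I f True, Suc d))"
    unfolding descend_def u by (auto simp: Let_def)
  have "AndN I d f \<in> Gp" using f by (simp add: achp_def)
  then have "OrN (restr P I f False) (Suc d) \<in> Gp \<and> OrN (restr P I f True) (Suc d) \<in> Gp"
    using assms(2) unfolding struct_def by blast
  then show ?thesis using v by auto
qed

lemma descend_reach:
  assumes "(descend P (Gp, E, LB, UB))\<^sup>*\<^sup>* ({1..nN P}, 0) v" and "struct P Gp E"
  shows "OrN (fst v) (snd v) \<in> Gp"
  using assms(1)
proof (induction rule: rtranclp_induct)
  case base then show ?case using assms(2) by (simp add: struct_def root_def)
next
  case (step y z) then show ?case using descend_in[OF step(2) assms(2)] by blast
qed

context pos begin

lemma iter_inv:
  assumes it: "maptree_iter P s s'" and iv: "inv P s"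
  shows "inv P s'"
proof -
  obtain Gp E LB UB where s: "s = (Gp, E, LB, UB)" by (cases s)
  have stt: "struct P Gp E" and lb: "lbok P Gp LB" and ub: "ubok P Gp UB" using iv s by (auto simp: inv_def)
  from it obtain I d where r: "(descend P s)\<^sup>*\<^sup>* ({1..nN P}, 0) (I, d)" and
    rest: "case expand P I d s of (Gp2, E2, LB2, UB2) \<Rightarrow>
          \<exists>LB3 UB4.
            (prop_step P Gp2 True)\<^sup>*\<^sup>* ({(I, d)}, LB2) ({}, LB3) \<and>
            (prop_step P Gp2 False)\<^sup>*\<^sup>* ({(I, d)}, UB2) ({}, UB4) \<and>
            s' = (Gp2, E2, LB3, UB4)"
    unfolding maptree_iter_def s by auto
  have inG: "OrN I d \<in> Gp" using descend_reach[OF r[unfolded s] stt] by simp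
  have gI: "good P I d" and sI: "I \<subseteq> {1..nN P}" using structD(2,3)[OF stt inG] by auto
  define kids where "kids = {OrN (restr P I f k) (Suc d) | f k. f \<in> ach P I d}"
  define Gp2 where "Gp2 = Gp \<union> {TermN I d} \<union> (\<lambda>f. AndN I d f) ` ach P I d \<union> kids"
  define E2 where "E2 = insert (OrN I d) E"
  define LB2 where "LB2 = (\<lambda>u. if u \<in> kids then (case u of OrN J e \<Rightarrow> heur P J e | _ \<Rightarrow> LB u) else LB u)"
  have ex: "expand P I d s = (Gp2, E2, LB2, UB)"
    unfolding expand_def s Gp2_def E2_def LB2_def kids_def by (simp add: Let_def)
  obtain LB3 UB4 where c1: "(prop_step P Gp2 True)\<^sup>*\<^sup>* ({(I, d)}, LB2) ({}, LB3)"
    and c2: "(prop_step P Gp2 False)\<^sup>*\<^sup>* ({(I, d)}, UB) ({}, UB4)" and s': "s' = (Gp2, E2, LB3, UB4)"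
    using rest unfolding ex by auto
  have sub: "Gp \<subseteq> Gp2" unfolding Gp2_def by auto
  have kid_or: "\<And>u. u \<in> kids \<Longrightarrow> \<exists>f k. f \<in> ach P I d \<and> u = OrN (restr P I f k) (Suc d)"
    unfolding kids_def by blast
  have A1: "root P \<in> Gp2" using structD(1)[OF stt] sub by auto
  have A2: "\<forall>J e. OrN J e \<in> Gp2 \<longrightarrow> good P J e \<and> J \<subseteq> {1..nN P}"
  proof (intro allI impI)
    fix J e assume "OrN J e \<in> Gp2"
    then have "OrN J e \<in> Gp \<or> OrN J e \<in> kids" unfolding Gp2_def by auto
    then show "good P J e \<and> J \<subseteq> {1..nN P}"
    proof
      assume "OrN J e \<in> Gp" then show ?thesis using structD(2,3)[OF stt] by blast
    next
      assume "OrN J e \<in> kids"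
      then obtain f k where "f \<in> ach P I d" "J = restr P I f k" "e = Suc d" using kid_or by blast
      then show ?thesis using good_kid[OF gI, of f k] sI by (auto simp: ach_def restr_def)
    qed
  qed
  have A3: "\<forall>J e g. AndN J e g \<in> Gp2 \<longrightarrow> OrN J e \<in> E2 \<and> g \<in> ach P J e \<and> OrN (restr P J g False) (Suc e) \<in> Gp2 \<and> OrN (restr P J g True) (Suc e) \<in> Gp2"
  proof (intro allI impI)
    fix J e g assume a: "AndN J e g \<in> Gp2"
    then have "AndN J e g \<in> Gp \<or> (J = I \<and> e = d \<and> g \<in> ach P I d)" unfolding Gp2_def kids_def by auto
    then show "OrN J e \<in> E2 \<and> g \<in> ach P J e \<and> OrN (restr P J g False) (Suc e) \<in> Gp2 \<and> OrN (restr P J g True) (Suc e) \<in> Gp2"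
    proof
      assume "AndN J e g \<in> Gp" then show ?thesis using structD(4-7)[OF stt] sub unfolding E2_def by blast
    next
      assume "J = I \<and> e = d \<and> g \<in> ach P I d"
      then show ?thesis unfolding E2_def Gp2_def kids_def by blast
    qed
  qed
  have A4: "\<forall>J e. OrN J e \<in> E2 \<longrightarrow> OrN J e \<in> Gp2 \<and> (\<forall>f\<in>ach P J e. AndN J e f \<in> Gp2)"
  proof (intro allI impI)
    fix J e assume "OrN J e \<in> E2"
    then have "OrN J e \<in> E \<or> (J = I \<and> e = d)" unfolding E2_def by auto
    then show "OrN J e \<in> Gp2 \<and> (\<forall>f\<in>ach P J e. AndN J e f \<in> Gp2)"
    proof
      assume "OrN J e \<in> E" then show ?thesis using structD(8,9)[OF stt] sub by blast
    next
      assume "J = I \<and> e = d" then show ?thesis using inG sub unfolding Gp2_def by auto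
    qed
  qed
  have stt2: "struct P Gp2 E2" unfolding struct_def by (intro conjI A1 A2 A3 A4)
  have lb2: "lbok P Gp2 LB2"
    unfolding lbok_def
  proof (intro allI impI)
    fix J e T assume j: "OrN J e \<in> Gp2" and ok: "nodes_ok P J T"
    show "LB2 (OrN J e) \<le> tc P J e T"
    proof (cases "OrN J e \<in> kids")
      case True
      then obtain f k where "f \<in> ach P I d" "J = restr P I f k" "e = Suc d" using kid_or by blast
      then have "finite J" using sI by (auto simp: restr_def intro: finite_subset)
      then show ?thesis using True heur_adm[OF _ ok] unfolding LB2_def by simp
    next
      case False
      then have "OrN J e \<in> Gp" using j unfolding Gp2_def by auto
      then show ?thesis using False lb ok unfolding LB2_def lbok_def by simp
    qed
  qed
  have "lbok P Gp2 LB3"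
    using lb_steps[OF c1 stt2] lb2 by (simp add: E2_def)
  moreover have "ubok P Gp2 UB4"
    using ub_steps[OF c2] ubok_mono[OF ub sub] by simp
  ultimately show ?thesis using stt2 s' by (simp add: inv_def)
qed

lemma init_inv: "inv P (init_state P)"
proof -
  have "valid_feats P {1..nN P} \<subseteq> {1..nF P}" by (auto simp: valid_feats_def)
  then have g: "good P {1..nN P} 0"
    unfolding good_def using card_mono[of "{1..nF P}" "valid_feats P {1..nN P}"] by simp
  have st: "struct P {root P} {}" unfolding struct_def root_def using g by auto
  have lb: "lbok P {root P} ((\<lambda>_. 0)(root P := heur P {1..nN P} 0))"
    unfolding lbok_def root_def using heur_adm by auto
  have ub: "ubok P {root P} (\<lambda>_. \<infinity>)" unfolding ubok_def by simp
  show ?thesis using st lb ub by (simp add: inv_def init_state_def)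
qed

end

lemma get_sol:
  assumes "get_solution P s I d S" and "s = (Gp, E, LB, UB)" and "ubok P Gp UB" and "I \<noteq> {}"
  shows "\<exists>T. nodes_ok P I T \<and> sol_of_tree P I d T = S \<and> tc P I d T \<le> UB (OrN I d)"
  using assms
proof (induction rule: get_solution.induct)
  case (leaf Gp' E' LB' UB' I d)
  then have eq: "Gp' = Gp" "UB' = UB" by auto
  have "cost_term P I d \<le> min_and P Gp UB I d"
    using leaf(2) eq unfolding min_and_def by auto
  then have "node_val P Gp UB I d = cost_term P I d"
    unfolding node_val_def by (simp add: min_absorb2)
  then have "cost_term P I d \<le> UB (OrN I d)" using leaf(4) unfolding ubok_def by metis
  then show ?case using leaf(5) by (intro exI[of _ Leaf]) auto
next
  case (split Gp' E' LB' UB' I d f S0 S1)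
  then have eq: "Gp' = Gp" "UB' = UB" by auto
  have fa: "f \<in> ach P I d" using split(4) by (simp add: achp_def)
  then have fv: "f \<in> valid_feats P I" by (simp add: ach_def)
  then have ne: "restr P I f False \<noteq> {}" "restr P I f True \<noteq> {}" "f \<in> {1..nF P}"
    by (auto simp: valid_feats_def)
  obtain T0 where T0: "nodes_ok P (restr P I f False) T0" "sol_of_tree P (restr P I f False) (Suc d) T0 = S0"
    "tc P (restr P I f False) (Suc d) T0 \<le> UB (OrN (restr P I f False) (Suc d))"
    using split.IH(1) split.prems ne by blast
  obtain T1 where T1: "nodes_ok P (restr P I f True) T1" "sol_of_tree P (restr P I f True) (Suc d) T1 = S1"
    "tc P (restr P I f True) (Suc d) T1 \<le> UB (OrN (restr P I f True) (Suc d))"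
    using split.IH(2) split.prems ne by blast
  have nv: "node_val P Gp UB I d = min_and P Gp UB I d"
    using split(3) eq unfolding node_val_def by (auto simp: min_def)
  have "tc P I d (Node f T0 T1) \<le> cost_and P I d + and_val P UB I d f"
    unfolding and_val_def using T0(3) T1(3) by (simp add: add.assoc add_mono)
  also have "\<dots> = min_and P Gp UB I d" using split(5) eq by simp
  also have "\<dots> \<le> UB (OrN I d)" using nv split.prems(2) unfolding ubok_def by metis
  finally show ?case using T0 T1 ne split.prems(3) by (intro exI[of _ "Node f T0 T1"]) auto
qed



theorem corollary11:
  fixes P :: inst and s :: state and S :: "gnode set"
  assumes "nN P \<ge> 1"
    and "rho1 P > 0" and "rho0 P > 0"
    and "0 < alpha P" and "alpha P < 1" and "beta P \<ge> 0"
    and "(maptree_iter P)\<^sup>*\<^sup>* (init_state P) s"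
    and "maptree_done P s"
    and "get_solution P s {1..nN P} 0 S"
  shows "\<exists>T. nodes_ok P {1..nN P} T \<and> sol_of_tree P {1..nN P} 0 T = S \<and>
           (\<forall>T'. nodes_ok P {1..nN P} T' \<longrightarrow> unnorm_post P T' \<le> unnorm_post P T)"
proof -
  interpret pos P using assms(2-6) by unfold_locales
  have iv: "inv P s" using assms(7)
  proof (induction rule: rtranclp_induct)
    case base then show ?case by (rule init_inv)
  next
    case (step y z) then show ?case using iter_inv by blast
  qed
  obtain Gp E LB UB where s: "s = (Gp, E, LB, UB)" by (cases s)
  have stt: "struct P Gp E" and lb: "lbok P Gp LB" and ub: "ubok P Gp UB" using iv s by (auto simp: inv_def)
  have ne: "{1..nN P} \<noteq> {}" using assms(1) by auto
  obtain T where T: "nodes_ok P {1..nN P} T" "sol_of_tree P {1..nN P} 0 T = S"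
    "tc P {1..nN P} 0 T \<le> UB (OrN {1..nN P} 0)"
    using get_sol[OF assms(9) s ub ne] by blast
  have dn: "UB (OrN {1..nN P} 0) \<le> LB (OrN {1..nN P} 0)"
    using assms(8) s by (simp add: maptree_done_def root_def not_less)
  have rG: "OrN {1..nN P} 0 \<in> Gp" using structD(1)[OF stt] by (simp add: root_def)
  show ?thesis
  proof (intro exI conjI allI impI)
    fix T' assume ok': "nodes_ok P {1..nN P} T'"
    have "tc P {1..nN P} 0 T \<le> tc P {1..nN P} 0 T'"
      using T(3) dn lb rG ok' unfolding lbok_def by (meson order_trans)
    then have "- ln (unnorm_post P T) \<le> - ln (unnorm_post P T')"
      unfolding unnorm_post_def tc_eq[OF T(1)] tc_eq[OF ok'] by simp
    moreover have "unnorm_post P T > 0" "unnorm_post P T' > 0"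
      unfolding unnorm_post_def using lik_pos prior_pos T(1) ok' by auto
    ultimately show "unnorm_post P T' \<le> unnorm_post P T" by simp
  qed (use T in auto)
qed

end
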